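(* Let $b\ge2$ be an integer and let $D$ be a nonempty subset of $\{-[\frac b2],-[\frac b2]+1,\ldots,b-1-[\frac b2]\}$. Let $(D_i)_{i\ge1}$ be a sequence with $D_i=D$ or $D_i=\{0\}$ for each $i$, and define $$\Lambda(b,D):=\bigcup_{k=1}^\infty\left\{\sum_{i=1}^k b^{i-1}d_i: d_i\in D_i\text{ for }1\le i\le k\right\}.$$ Then $$\dim_{Be}\Lambda(b,D)=\limsup_{n\to\infty}\frac{\#\{i:D_i=D,\ 1\le i\le n\}}{n}\cdot\frac{\log\#D}{\log b}.$$
   Context: $[x]$ is the integer part of $x$. For countable $\Lambda\subseteq\mathbb{R}^d$ and $r>0$, $D_r^+(\Lambda)=\limsup_{h\to\infty}\sup_{x\in\mathbb{R}^d}\#(\Lambda\cap B(x,h))/h^r$ ($B(x,h)$ the open ball), and the Beurling dimension is $\dim_{Be}(\Lambda)=\inf\{r:D_r^+(\Lambda)=0\}$. *)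

theory Defs
  imports "HOL-Analysis.Analysis" "HOL-Library.Extended_Real"
begin

definition npts :: "'a set \<Rightarrow> ereal" where
  "npts A = (if finite A then ereal (real (card A)) else \<infinity>)"

definition upper_beurling_density :: "real \<Rightarrow> ('a::euclidean_space) set \<Rightarrow> ereal" where
  "upper_beurling_density r \<Lambda> =
     Limsup at_top (\<lambda>h::real. SUP x\<in>(UNIV::'a set). npts (\<Lambda> \<inter> ball x h) / ereal (h powr r))"

definition beurling_dim :: "('a::euclidean_space) set \<Rightarrow> ereal" where
  "beurling_dim \<Lambda> = Inf {ereal r | r. r > 0 \<and> upper_beurling_density r \<Lambda> = 0}"

definition Lambda_set :: "int \<Rightarrow> (nat \<Rightarrow> int set) \<Rightarrow> real set" where
  "Lambda_set b Ds = (\<Union>k\<in>{1..}. {real_of_int (\<Sum>i=1..k. b ^ (i - 1) * d i) | d.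
       \<forall>i\<in>{1..k}. d i \<in> Ds i})"

end

theory Submission imports Defs begin

lemma digit_sum_bound:
  fixes b :: int and e :: "nat \<Rightarrow> int"
  assumes b1: "b \<ge> 1" and "\<forall>i\<in>{1..n}. \<bar>e i\<bar> \<le> b - 1"
  shows "\<bar>\<Sum>i=1..n. b^(i-1) * e i\<bar> \<le> b^n - 1"
  using assms(2)
proof (induction n)
  case 0 then show ?case by simp
next
  case (Suc n)
  have IH: "\<bar>\<Sum>i=1..n. b^(i-1) * e i\<bar> \<le> b^n - 1" using Suc by auto
  have e: "\<bar>e (Suc n)\<bar> \<le> b - 1" using Suc.prems by auto
  have pn: "b^n \<ge> 0" using b1 by simp
  have "\<bar>b^n * e (Suc n)\<bar> \<le> b^n * (b-1)" using e pn by (simp add: abs_mult mult_left_mono)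
  moreover have "(\<Sum>i=1..Suc n. b^(i-1) * e i) = (\<Sum>i=1..n. b^(i-1) * e i) + b^n * e (Suc n)"
    by simp
  ultimately show ?case using IH by (simp add: algebra_simps) 
qed

lemma digit_sum_inj:
  fixes b lo :: int and d d' :: "nat \<Rightarrow> int"
  assumes b1: "b \<ge> 1"
  shows "\<forall>i\<in>{1..n}. d i \<in> {lo..lo+b-1} \<Longrightarrow> \<forall>i\<in>{1..n}. d' i \<in> {lo..lo+b-1} \<Longrightarrow>
    (\<Sum>i=1..n. b^(i-1) * d i) = (\<Sum>i=1..n. b^(i-1) * d' i) \<Longrightarrow> \<forall>i\<in>{1..n}. d i = d' i"
proof (induction n)
  case 0 then show ?case by simp
next
  case (Suc n)
  define S where "S = (\<Sum>i=1..n. b^(i-1) * d i)"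
  define S' where "S' = (\<Sum>i=1..n. b^(i-1) * d' i)"
  have eq: "S + b^n * d (Suc n) = S' + b^n * d' (Suc n)"
    using Suc.prems(3) by (simp add: S_def S'_def)
  have p1: "\<forall>i\<in>{1..n}. d i \<in> {lo..lo+b-1}" using Suc.prems(1) by simp
  have p2: "\<forall>i\<in>{1..n}. d' i \<in> {lo..lo+b-1}" using Suc.prems(2) by simp
  have "S - S' = (\<Sum>i=1..n. b^(i-1) * d i - b^(i-1) * d' i)"
    unfolding S_def S'_def by (rule sum_subtractf[symmetric])
  also have "\<dots> = (\<Sum>i=1..n. b^(i-1) * (d i - d' i))"
    by (simp add: right_diff_distrib)
  also have "\<bar>\<dots>\<bar> \<le> b^n - 1"
  proof (intro digit_sum_bound[OF b1] ballI)
    fix i assume i: "i \<in> {1..n}"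
    then have "d i \<in> {lo..lo+b-1}" "d' i \<in> {lo..lo+b-1}" using p1 p2 by blast+
    then show "\<bar>d i - d' i\<bar> \<le> b - 1" unfolding abs_le_iff by simp
  qed
  finally have bnd: "\<bar>S - S'\<bar> \<le> b^n - 1" .
  have same: "d (Suc n) = d' (Suc n)"
  proof (rule ccontr)
    assume ne: "d (Suc n) \<noteq> d' (Suc n)"
    have "\<bar>d (Suc n) - d' (Suc n)\<bar> \<ge> 1" using ne by linarith
    moreover have pn: "b^n \<ge> 0" using b1 by simp
    ultimately have "b^n * 1 \<le> b^n * \<bar>d (Suc n) - d' (Suc n)\<bar>"
      by (intro mult_left_mono)
    moreover have "\<bar>b^n * (d (Suc n) - d' (Suc n))\<bar> = b^n * \<bar>d (Suc n) - d' (Suc n)\<bar>"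
      using pn by (simp only: abs_mult abs_of_nonneg)
    moreover have "b^n * (d (Suc n) - d' (Suc n)) = S' - S" using eq by (simp add: algebra_simps)
    ultimately show False using bnd by linarith
  qed
  then have "S = S'" using eq by simp
  then have "\<forall>i\<in>{1..n}. d i = d' i" using Suc.IH[OF p1 p2] by (simp add: S_def S'_def)
  then show ?case using same by (auto simp: le_Suc_eq)
qed

locale lamctx =
  fixes b :: int and D :: "int set" and Ds :: "nat \<Rightarrow> int set"
  assumes b2: "b \<ge> 2" and Dne: "D \<noteq> {}"
    and Dsub: "D \<subseteq> {- (b div 2) .. b - 1 - (b div 2)}"
    and Dsi: "\<And>i. i \<ge> 1 \<Longrightarrow> Ds i = D \<or> Ds i = {0}"
begin

definition "m = card D"
definition "N n = card {i \<in> {1..n}. Ds i = D}"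
definition "L n = (\<Union>j\<le>n. (\<lambda>d. \<Sum>i=1..j. b^(i-1) * d i) ` PiE {1..j} Ds)"

lemma finD: "finite D"
  using Dsub finite_subset by blast

lemma m_pos: "m \<ge> 1"
  using finD Dne by (simp add: m_def Suc_le_eq card_gt_0_iff)

lemma h1: "0 \<le> b div 2" using b2 by simp
lemma h2: "b div 2 \<le> b - 1" using b2 by presburger

lemma digit_range: "i \<ge> 1 \<Longrightarrow> x \<in> Ds i \<Longrightarrow> x \<in> {- (b div 2) .. - (b div 2) + b - 1}"
proof -
  assume i: "i \<ge> 1" and x: "x \<in> Ds i"
  show ?thesis
  proof (cases "Ds i = D")
    case True
    then have "x \<in> {- (b div 2) .. b - 1 - (b div 2)}" using x Dsub by blast
    then show ?thesis by simp
  next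
    case False
    then have "x = 0" using Dsi[OF i] x by auto
    then show ?thesis using h1 h2 by simp
  qed
qed

lemma digit_abs: "i \<ge> 1 \<Longrightarrow> x \<in> Ds i \<Longrightarrow> \<bar>x\<bar> \<le> b - 1"
proof -
  assume "i \<ge> 1" "x \<in> Ds i"
  then have "x \<in> {- (b div 2) .. - (b div 2) + b - 1}" by (rule digit_range)
  then have a: "- (b div 2) \<le> x \<and> x \<le> - (b div 2) + b - 1" by (simp only: atLeastAtMost_iff)
  have "x \<le> b - 1 \<and> - x \<le> b - 1" using a h1 h2 by linarith
  then show ?thesis by (simp only: abs_le_iff)
qed


lemma finDs: "i \<ge> 1 \<Longrightarrow> finite (Ds i)"
  using Dsi[of i] finD by (metis finite.emptyI finite_insert)

lemma finite_PiDs: "finite (PiE {1..j} Ds)"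
  by (rule finite_PiE) (auto intro: finDs)

lemma card_Ds: "i \<ge> 1 \<Longrightarrow> card (Ds i) = (if Ds i = D then m else 1)"
proof -
  assume i: "i \<ge> 1"
  show ?thesis
  proof (cases "Ds i = D")
    case True then show ?thesis by (simp add: m_def)
  next
    case False then have "Ds i = {0}" using Dsi[OF i] by blast
    then show ?thesis using False by simp
  qed
qed

lemma prod_card: "(\<Prod>i\<in>{1..j}. card (Ds i)) = m ^ N j"
proof -
  have "(\<Prod>i\<in>{1..j}. card (Ds i)) = (\<Prod>i\<in>{1..j}. (if Ds i = D then m else 1))"
    by (intro prod.cong) (auto simp: card_Ds)
  also have "\<dots> = m ^ card ({1..j} \<inter> {i. Ds i = D})"
    by (simp add: prod.If_cases)
  also have "{1..j} \<inter> {i. Ds i = D} = {i \<in> {1..j}. Ds i = D}" by auto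
  finally show ?thesis by (simp add: N_def)
qed

lemma N_mono: "j \<le> n \<Longrightarrow> N j \<le> N n"
  unfolding N_def by (intro card_mono) auto

lemma N_le: "N n \<le> n"
proof -
  have "N n \<le> card {1..n}" unfolding N_def by (intro card_mono) auto
  then show ?thesis by simp
qed

lemma finite_L: "finite (L n)"
  unfolding L_def by (intro finite_UN_I finite_imageI finite_PiE) (auto intro: finDs)

lemma card_L: "card (L n) \<le> (n+1) * m ^ N n"
proof -
  have "card (L n) \<le> (\<Sum>j\<le>n. card ((\<lambda>d. \<Sum>i=1..j. b^(i-1) * d i) ` PiE {1..j} Ds))"
    unfolding L_def by (rule card_UN_le) simp
  also have "\<dots> \<le> (\<Sum>j\<le>n. m ^ N n)"
  proof (intro sum_mono)
    fix j assume "j \<in> {..n}"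
    then have "j \<le> n" by simp
    have "card ((\<lambda>d. \<Sum>i=1..j. b^(i-1) * d i) ` PiE {1..j} Ds) \<le> card (PiE {1..j} Ds)"
      by (rule card_image_le) (rule finite_PiDs)
    also have "\<dots> = m ^ N j" by (simp only: card_PiE[OF finite_atLeastAtMost] prod_card)
    also have "\<dots> \<le> m ^ N n" using m_pos N_mono[OF \<open>j \<le> n\<close>] by (intro power_increasing) auto
    finally show "card ((\<lambda>d. \<Sum>i=1..j. b^(i-1) * d i) ` PiE {1..j} Ds) \<le> m ^ N n" .
  qed
  also have "\<dots> = (n+1) * m ^ N n" by simp
  finally show ?thesis .
qed

lemma L_bound: "l \<in> L n \<Longrightarrow> \<bar>l\<bar> \<le> b^n - 1"
proof -
  assume "l \<in> L n"
  then obtain j d where j: "j \<le> n" and d: "d \<in> PiE {1..j} Ds" and l: "l = (\<Sum>i=1..j. b^(i-1) * d i)"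
    unfolding L_def by auto
  have "\<bar>l\<bar> \<le> b^j - 1" unfolding l
  proof (intro digit_sum_bound ballI)
    show "b \<ge> 1" using b2 by simp
    fix i assume i: "i \<in> {1..j}"
    then have "d i \<in> Ds i" using d by (auto simp: PiE_iff)
    then show "\<bar>d i\<bar> \<le> b - 1" using i by (intro digit_abs) auto
  qed
  also have "b^j \<le> b^n" using b2 j by (intro power_increasing) auto
  finally show ?thesis by simp
qed


lemma cover:
  fixes x h :: real and n :: nat
  assumes h: "h \<le> real_of_int b ^ n"
  shows "Lambda_set b Ds \<inter> ball x h \<subseteq> (\<lambda>(l,t). real_of_int (l + b^n * t)) `
     (L n \<times> {\<lfloor>x / real_of_int b ^ n\<rfloor> - 1 .. \<lfloor>x / real_of_int b ^ n\<rfloor> + 2})"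
proof
  fix y assume y: "y \<in> Lambda_set b Ds \<inter> ball x h"
  then obtain k d where k: "k \<ge> 1" and d: "\<forall>i\<in>{1..k}. d i \<in> Ds i"
    and yd: "y = real_of_int (\<Sum>i=1..k. b^(i-1) * d i)"
    unfolding Lambda_set_def by auto
  define j where "j = min k n"
  define l where "l = (\<Sum>i=1..j. b^(i-1) * d i)"
  define R where "R = (\<Sum>i\<in>{1..k} - {1..j}. b^(i-1) * d i)"
  have split: "(\<Sum>i=1..k. b^(i-1) * d i) = R + l"
    unfolding R_def l_def j_def by (rule sum.subset_diff) auto
  have "b^n dvd R"
    unfolding R_def
  proof (rule dvd_sum)
    fix i assume i: "i \<in> {1..k} - {1..j}"
    then have "n \<le> i - 1" using j_def by auto
    then show "b^n dvd b^(i-1) * d i" by (intro dvd_mult2 le_imp_power_dvd)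
  qed
  then obtain t where t: "R = b^n * t" by (auto elim: dvdE)
  have lL: "l \<in> L n"
  proof -
    have "restrict d {1..j} \<in> PiE {1..j} Ds" using d j_def by auto
    moreover have "l = (\<Sum>i=1..j. b^(i-1) * restrict d {1..j} i)" unfolding l_def by (intro sum.cong) auto
    moreover have "j \<le> n" by (simp add: j_def)
    ultimately show ?thesis unfolding L_def by blast
  qed
  have lb: "\<bar>l\<bar> \<le> b^n - 1" by (rule L_bound[OF lL])
  define B where "B = real_of_int b ^ n"
  have Bpos: "B > 0" using b2 by (simp add: B_def)
  have yv0: "y = real_of_int (b^n * t + l)" by (simp only: yd split t)
  have yv: "y = real_of_int l + B * real_of_int t" by (simp add: yv0 B_def)
  have yx: "\<bar>y - x\<bar> < h" using y by (auto simp: dist_real_def mem_ball abs_minus_commute)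
  have "real_of_int \<bar>l\<bar> \<le> real_of_int (b^n - 1)" using lb by (simp only: of_int_le_iff)
  then have lr: "\<bar>real_of_int l\<bar> \<le> B - 1" by (simp add: B_def)
  have t1: "B * real_of_int t < x + 2 * B" using yv yx lr h unfolding B_def[symmetric] abs_le_iff abs_less_iff by linarith
  have t2: "B * real_of_int t > x - 2 * B" using yv yx lr h unfolding B_def[symmetric] abs_le_iff abs_less_iff by linarith
  define z where "z = x / B"
  have xz: "x = B * z" using Bpos by (simp add: z_def)
  have "B * real_of_int t < B * (z + 2)" using t1 unfolding xz by (simp add: algebra_simps)
  then have ta: "real_of_int t < z + 2" using mult_less_cancel_left_pos[OF Bpos] by blast
  have "B * (z - 2) < B * real_of_int t" using t2 unfolding xz by (simp add: algebra_simps)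
  then have tb: "real_of_int t > z - 2" using mult_less_cancel_left_pos[OF Bpos] by blast
  have fl1: "real_of_int \<lfloor>z\<rfloor> \<le> z" and fl2: "z < real_of_int \<lfloor>z\<rfloor> + 1" by linarith+
  have "real_of_int t < real_of_int (\<lfloor>z\<rfloor> + 3)" using ta fl2 by linarith
  moreover have "real_of_int t > real_of_int (\<lfloor>z\<rfloor> - 2)" using tb fl1 by linarith
  ultimately have "t < \<lfloor>z\<rfloor> + 3" "t > \<lfloor>z\<rfloor> - 2" by (simp_all only: of_int_less_iff)
  then have tin: "t \<in> {\<lfloor>x / real_of_int b ^ n\<rfloor> - 1 .. \<lfloor>x / real_of_int b ^ n\<rfloor> + 2}"
    by (simp add: z_def B_def)
  have "y = (\<lambda>(l,t). real_of_int (l + b^n * t)) (l, t)" using yv by (simp add: B_def)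
  then show "y \<in> (\<lambda>(l,t). real_of_int (l + b^n * t)) `
     (L n \<times> {\<lfloor>x / real_of_int b ^ n\<rfloor> - 1 .. \<lfloor>x / real_of_int b ^ n\<rfloor> + 2})"
    using lL tin by blast
qed

lemma count_upper:
  fixes x h :: real and n :: nat
  assumes h: "h \<le> real_of_int b ^ n"
  shows "finite (Lambda_set b Ds \<inter> ball x h)"
    and "card (Lambda_set b Ds \<inter> ball x h) \<le> 4 * (n+1) * m ^ N n"
proof -
  define T where "T = {\<lfloor>x / real_of_int b ^ n\<rfloor> - 1 .. \<lfloor>x / real_of_int b ^ n\<rfloor> + 2}"
  define F where "F = (\<lambda>(l,t). real_of_int (l + b^n * t)) ` (L n \<times> T)"
  have sub: "Lambda_set b Ds \<inter> ball x h \<subseteq> F" unfolding F_def T_def by (rule cover[OF h])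
  have finF: "finite F" unfolding F_def T_def using finite_L by simp
  show "finite (Lambda_set b Ds \<inter> ball x h)" using sub finF finite_subset by blast
  have cT: "card T = 4" unfolding T_def by simp
  have "card (Lambda_set b Ds \<inter> ball x h) \<le> card F" using sub finF by (rule card_mono[rotated])
  also have "\<dots> \<le> card (L n \<times> T)" unfolding F_def by (rule card_image_le) (simp add: finite_L T_def)
  also have "\<dots> = card (L n) * 4" by (simp add: card_cartesian_product cT)
  also have "\<dots> \<le> (n+1) * m ^ N n * 4" using card_L[of n] by (intro mult_right_mono) auto
  finally show "card (Lambda_set b Ds \<inter> ball x h) \<le> 4 * (n+1) * m ^ N n" by (simp add: algebra_simps)
qed

lemma count_lower:
  fixes n :: nat
  assumes n: "n \<ge> 1"
  shows "m ^ N n \<le> card (Lambda_set b Ds \<inter> ball 0 (real_of_int b ^ n))"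
proof -
  define g where "g = (\<lambda>d. real_of_int (\<Sum>i=1..n. b^(i-1) * d i))"
  have sub: "g ` PiE {1..n} Ds \<subseteq> Lambda_set b Ds \<inter> ball 0 (real_of_int b ^ n)"
  proof
    fix y assume "y \<in> g ` PiE {1..n} Ds"
    then obtain d where d: "d \<in> PiE {1..n} Ds" and y: "y = g d" by auto
    have dd: "\<forall>i\<in>{1..n}. d i \<in> Ds i" using d by (simp add: PiE_iff)
    have "y \<in> Lambda_set b Ds" unfolding Lambda_set_def y g_def
      using n dd by blast
    moreover have "\<bar>\<Sum>i=1..n. b^(i-1) * d i\<bar> \<le> b^n - 1"
    proof (intro digit_sum_bound ballI)
      show "b \<ge> 1" using b2 by simp
      fix i assume i: "i \<in> {1..n}"
      then have "d i \<in> Ds i" using d by (auto simp: PiE_iff)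
      then show "\<bar>d i\<bar> \<le> b - 1" using i by (intro digit_abs) auto
    qed
    then have "real_of_int \<bar>\<Sum>i=1..n. b^(i-1) * d i\<bar> \<le> real_of_int (b^n - 1)" by (simp only: of_int_le_iff)
    then have "\<bar>y\<bar> \<le> real_of_int b ^ n - 1" unfolding y g_def by (simp only: of_int_abs of_int_diff of_int_power of_int_1)
    then have "\<bar>y\<bar> < real_of_int b ^ n" by linarith
    ultimately show "y \<in> Lambda_set b Ds \<inter> ball 0 (real_of_int b ^ n)" by (simp add: dist_real_def)
  qed
  have "inj_on g (PiE {1..n} Ds)"
  proof (rule inj_onI)
    fix d d' assume d: "d \<in> PiE {1..n} Ds" and d': "d' \<in> PiE {1..n} Ds" and e: "g d = g d'"
    have r1: "\<forall>i\<in>{1..n}. d i \<in> {- (b div 2) .. - (b div 2) + b - 1}"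
    proof
      fix i assume i: "i \<in> {1..n}"
      then have "d i \<in> Ds i" using d by (auto simp: PiE_iff)
      then show "d i \<in> {- (b div 2) .. - (b div 2) + b - 1}" using i by (intro digit_range) auto
    qed
    have r2: "\<forall>i\<in>{1..n}. d' i \<in> {- (b div 2) .. - (b div 2) + b - 1}"
    proof
      fix i assume i: "i \<in> {1..n}"
      then have "d' i \<in> Ds i" using d' by (auto simp: PiE_iff)
      then show "d' i \<in> {- (b div 2) .. - (b div 2) + b - 1}" using i by (intro digit_range) auto
    qed
      have "(\<Sum>i=1..n. b^(i-1) * d i) = (\<Sum>i=1..n. b^(i-1) * d' i)" using e unfolding g_def by (simp only: of_int_eq_iff)
    moreover have b1: "b \<ge> 1" using b2 by simp
    ultimately have eqi: "\<forall>i\<in>{1..n}. d i = d' i" using digit_sum_inj[OF b1 r1 r2] by blast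
    show "d = d'" by (rule PiE_ext[OF d d']) (use eqi in blast)
  qed
  then have c: "card (g ` PiE {1..n} Ds) = m ^ N n"
    by (simp only: card_image card_PiE[OF finite_atLeastAtMost] prod_card)
  have f: "finite (Lambda_set b Ds \<inter> ball 0 (real_of_int b ^ n))"
    by (rule count_upper(1)) (rule order_refl)
  show ?thesis using card_mono[OF f sub] c by simp
qed


definition "BB = real_of_int b"
definition "lm = ln (real m)"
definition "lb = ln BB"

lemma BB2: "BB \<ge> 2" using b2 by (simp add: BB_def)
lemma lb_pos: "lb > 0" using BB2 by (simp add: lb_def)
lemma lm_nonneg: "lm \<ge> 0" using m_pos by (simp add: lm_def)

lemma m_pow: "real (m ^ k) = exp (real k * lm)"
proof -
  have "real m > 0" using m_pos by simp
  then have "exp lm = real m" by (simp add: lm_def)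
  then show ?thesis by (simp add: exp_of_nat_mult)
qed

lemma BB_pow_powr: "(BB ^ n) powr r = exp (r * real n * lb)"
proof -
  have "BB ^ n > 0" using BB2 by simp
  then have "(BB ^ n) powr r = exp (r * ln (BB ^ n))" by (simp add: powr_def del: power_eq_0_iff)
  also have "ln (BB ^ n) = real n * lb" by (simp add: ln_realpow lb_def)
  finally show ?thesis by (simp add: algebra_simps)
qed

lemma exists_pow: "\<exists>n. h \<le> BB ^ n"
proof -
  obtain n where "h < BB ^ n" using real_arch_pow[of BB h] BB2 by auto
  then show ?thesis by (intro exI[of _ n]) simp
qed

definition "ff r h = (SUP x\<in>(UNIV::real set). npts (Lambda_set b Ds \<inter> ball x h) / ereal (h powr r))"

lemma dens_eq: "upper_beurling_density r (Lambda_set b Ds) = Limsup at_top (ff r)"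
  unfolding upper_beurling_density_def ff_def by simp

lemma term_eq:
  assumes "h > 0" "h \<le> BB ^ n"
  shows "npts (Lambda_set b Ds \<inter> ball x h) / ereal (h powr r)
       = ereal (real (card (Lambda_set b Ds \<inter> ball x h)) / h powr r)"
proof -
  have "finite (Lambda_set b Ds \<inter> ball x h)" using assms(2) count_upper(1) by (simp add: BB_def)
  moreover have "h powr r > 0" using assms(1) by simp
  ultimately show ?thesis by (simp add: npts_def)
qed

lemma dens_zero:
  assumes r: "r > 0" and c: "c < r"
    and ev: "\<forall>\<^sub>F n in sequentially. real (N n) * lm \<le> c * real n * lb"
  shows "upper_beurling_density r (Lambda_set b Ds) = 0"
proof -
  define q where "q = exp ((c - r) * lb)"
  have q0: "q > 0" and q1: "q < 1" using c lb_pos by (auto simp: q_def mult_neg_pos)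
  define g where "g n = 4 * (real n + 1) * exp (c * real n * lb) / exp ((real n - 1) * r * lb)" for n :: nat
  have geq: "g n = (4 * exp (r * lb)) * (real n * q ^ n + q ^ n)" for n
  proof -
    have "exp (c * real n * lb) / exp ((real n - 1) * r * lb) = exp (r * lb) * exp (real n * ((c - r) * lb))"
      by (simp add: exp_diff[symmetric] exp_add[symmetric] algebra_simps)
    also have "exp (real n * ((c - r) * lb)) = q ^ n" unfolding q_def by (rule exp_of_nat_mult)
    finally have k: "exp (c * real n * lb) / exp ((real n - 1) * r * lb) = exp (r * lb) * q ^ n" .
    have "g n = 4 * (real n + 1) * (exp (c * real n * lb) / exp ((real n - 1) * r * lb))"
      unfolding g_def by (simp only: times_divide_eq_right)
    then show ?thesis unfolding k by (simp add: algebra_simps)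
  qed
  have "(\<lambda>n. real n * q ^ n + q ^ n) \<longlonglongrightarrow> 0 + 0"
    using q0 q1 by (intro tendsto_add powser_times_n_limit_0 LIMSEQ_power_zero) auto
  then have "(\<lambda>n. (4 * exp (r * lb)) * (real n * q ^ n + q ^ n)) \<longlonglongrightarrow> (4 * exp (r * lb)) * 0"
    by (intro tendsto_mult tendsto_const) simp
  moreover have "g = (\<lambda>n. (4 * exp (r * lb)) * (real n * q ^ n + q ^ n))" using geq by (intro ext)
  ultimately have glim: "g \<longlonglongrightarrow> 0" by simp
  have up: "Limsup at_top (ff r) \<le> ereal e" if e: "e > 0" for e
  proof -
    have "\<forall>\<^sub>F n in sequentially. g n < e" using order_tendstoD(2)[OF glim] e by simp
    with ev have "\<forall>\<^sub>F n in sequentially. g n < e \<and> real (N n) * lm \<le> c * real n * lb"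
      by eventually_elim auto
    then obtain n0 where n0: "\<And>n. n \<ge> n0 \<Longrightarrow> g n < e \<and> real (N n) * lm \<le> c * real n * lb"
      unfolding eventually_sequentially by blast
    have "ff r h \<le> ereal e" if h: "h \<ge> BB ^ (n0 + 1)" for h
    proof -
      define n where "n = (LEAST n. h \<le> BB ^ n)"
      have hn: "h \<le> BB ^ n" unfolding n_def using exists_pow by (rule LeastI_ex)
      have "BB ^ (n0 + 1) > 0" using BB2 by simp
      then have hpos: "h > 0" using h by linarith
      have nn0: "n \<ge> n0 + 1"
      proof (rule ccontr)
        assume "\<not> n \<ge> n0 + 1"
        then have "n < n0 + 1" by simp
        then have "BB ^ n < BB ^ (n0 + 1)" using BB2 by (intro power_strict_increasing) auto
        then show False using h hn by simp
      qed
      have hlow: "BB ^ (n - 1) < h"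
      proof -
        have "n - 1 < n" using nn0 by simp
        then have "\<not> h \<le> BB ^ (n - 1)" unfolding n_def by (rule not_less_Least)
        then show ?thesis by simp
      qed
      have gn: "g n < e" and Nn: "real (N n) * lm \<le> c * real n * lb" using n0 nn0 by auto
      show ?thesis unfolding ff_def
      proof (rule SUP_least)
        fix x :: real
        define C where "C = card (Lambda_set b Ds \<inter> ball x h)"
        have C: "C \<le> 4 * (n+1) * m ^ N n" unfolding C_def using hn count_upper(2) by (simp add: BB_def)
        have "real C \<le> real (4 * (n+1) * m ^ N n)" using C by (simp only: of_nat_le_iff)
        also have "\<dots> = 4 * (real n + 1) * real (m ^ N n)" by (simp only: of_nat_mult of_nat_add of_nat_1 of_nat_numeral)
        also have "real (m ^ N n) \<le> exp (c * real n * lb)" unfolding m_pow using Nn by simp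
        then have "4 * (real n + 1) * real (m ^ N n) \<le> 4 * (real n + 1) * exp (c * real n * lb)"
          by (intro mult_left_mono) auto
        finally have Cb: "real C \<le> 4 * (real n + 1) * exp (c * real n * lb)" .
        have "(BB ^ (n - 1)) powr r \<le> h powr r"
          using hlow BB2 r by (intro powr_mono2) auto
        then have hr: "exp ((real n - 1) * r * lb) \<le> h powr r"
          using nn0 by (simp add: BB_pow_powr of_nat_diff algebra_simps)
        have "real C / h powr r \<le> 4 * (real n + 1) * exp (c * real n * lb) / exp ((real n - 1) * r * lb)"
          using Cb hr by (intro frac_le) auto
        then have "real C / h powr r < e" using gn unfolding g_def by linarith
        then have "ereal (real C / h powr r) \<le> ereal e" by simp
        then show "npts (Lambda_set b Ds \<inter> ball x h) / ereal (h powr r) \<le> ereal e"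
          by (simp only: term_eq[OF hpos hn] C_def)
      qed
    qed
    then have "\<forall>\<^sub>F h in at_top. ff r h \<le> ereal e"
      unfolding eventually_at_top_linorder by blast
    then show ?thesis by (rule Limsup_bounded)
  qed
  have lo: "0 \<le> Limsup at_top (ff r)"
  proof (rule le_Limsup)
    show "(at_top :: real filter) \<noteq> bot" by simp
    have "0 \<le> ff r h" if "h > 0" for h
    proof -
      have "0 \<le> npts (Lambda_set b Ds \<inter> ball 0 h)" unfolding npts_def by simp
      moreover have "0 \<le> ereal (h powr r)" by simp
      ultimately have "0 \<le> npts (Lambda_set b Ds \<inter> ball 0 h) / ereal (h powr r)"
        by (rule zero_le_divide_ereal)
      also have "\<dots> \<le> ff r h" unfolding ff_def by (rule SUP_upper) simp
      finally show ?thesis .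
    qed
    then show "\<forall>\<^sub>F h in at_top. 0 \<le> ff r h"
      unfolding eventually_at_top_linorder by (intro exI[of _ 1] allI impI) simp
  qed
  have "Limsup at_top (ff r) \<le> 0"
  proof (rule ereal_le_epsilon2)
    fix e :: real assume "e > 0"
    then have "Limsup at_top (ff r) \<le> ereal e" by (rule up)
    then show "Limsup at_top (ff r) \<le> 0 + ereal e" by simp
  qed
  with lo show ?thesis by (simp add: dens_eq)
qed


lemma dens_pos:
  assumes r: "r > 0"
    and fr: "\<exists>\<^sub>F n in sequentially. r * real n * lb < real (N n) * lm"
  shows "upper_beurling_density r (Lambda_set b Ds) \<noteq> 0"
proof
  assume "upper_beurling_density r (Lambda_set b Ds) = 0"
  then have "Limsup at_top (ff r) < 1" by (simp add: dens_eq)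
  then have "\<forall>\<^sub>F h in at_top. ff r h < 1" by (rule Limsup_lessD)
  then obtain H where H: "\<And>h. h \<ge> H \<Longrightarrow> ff r h < 1"
    unfolding eventually_at_top_linorder by blast
  obtain n0 where n0: "H \<le> BB ^ n0" using exists_pow by blast
  obtain n where nn0: "n \<ge> n0" and P: "r * real n * lb < real (N n) * lm"
    using fr unfolding frequently_sequentially by blast
  have n1: "n \<ge> 1"
  proof (rule ccontr)
    assume "\<not> n \<ge> 1"
    then have "n = 0" by simp
    then show False using P by (simp add: N_def)
  qed
  define h where "h = BB ^ n"
  have hH: "h \<ge> H" using n0 BB2 nn0 unfolding h_def by (meson order_trans power_increasing one_le_numeral order.trans)
  have hpos: "h > 0" using BB2 by (simp add: h_def)
  have hn': "h \<le> BB ^ n" by (simp add: h_def)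
  have "m ^ N n \<le> card (Lambda_set b Ds \<inter> ball 0 h)"
    using count_lower[OF n1] by (simp add: h_def BB_def)
  then have c1: "exp (real (N n) * lm) \<le> real (card (Lambda_set b Ds \<inter> ball 0 h))"
    unfolding m_pow[symmetric] by (simp only: of_nat_le_iff)
  have "h powr r = exp (r * real n * lb)" unfolding h_def by (rule BB_pow_powr)
  also have "\<dots> < exp (real (N n) * lm)" using P by simp
  finally have "h powr r < real (card (Lambda_set b Ds \<inter> ball 0 h))" using c1 by linarith
  moreover have "h powr r > 0" using hpos by simp
  ultimately have "1 \<le> real (card (Lambda_set b Ds \<inter> ball 0 h)) / h powr r" by simp
  then have "ereal 1 \<le> ereal (real (card (Lambda_set b Ds \<inter> ball 0 h)) / h powr r)" by simp
  then have "1 \<le> npts (Lambda_set b Ds \<inter> ball 0 h) / ereal (h powr r)"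
    by (simp only: term_eq[OF hpos hn'] one_ereal_def)
  also have "\<dots> \<le> ff r h" unfolding ff_def by (rule SUP_upper) simp
  finally have "1 \<le> ff r h" .
  with H[OF hH] show False by simp
qed

end

theorem lemma5p2:
  fixes b :: int and D :: "int set" and Ds :: "nat \<Rightarrow> int set"
  assumes "b \<ge> 2"
    and "D \<noteq> {}"
    and "D \<subseteq> {- (b div 2) .. b - 1 - (b div 2)}"
    and "\<And>i. i \<ge> 1 \<Longrightarrow> Ds i = D \<or> Ds i = {0}"
  shows "beurling_dim (Lambda_set b Ds) =
     limsup (\<lambda>n. ereal (real (card {i \<in> {1..n}. Ds i = D}) / real n))
       * ereal (ln (real (card D)) / ln (real_of_int b))"
proof -
  interpret lamctx b D Ds using assms by unfold_locales
  define sq where "sq n = ereal (real (N n) / real n)" for n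
  have sqeq: "(\<lambda>n. ereal (real (card {i \<in> {1..n}. Ds i = D}) / real n)) = sq"
    by (rule ext) (simp only: sq_def N_def)
  have sq0: "0 \<le> sq n" for n by (simp add: sq_def)
  have sq1: "sq n \<le> 1" for n
  proof (cases "n = 0")
    case True then show ?thesis by (simp add: sq_def)
  next
    case False
    have "real (N n) \<le> real n" using N_le by simp
    then show ?thesis using False by (simp add: sq_def)
  qed
  have L0: "0 \<le> limsup sq" by (rule le_Limsup) (auto simp: sq0)
  have L1: "limsup sq \<le> 1" by (rule Limsup_bounded) (auto simp: sq1)
  obtain s where s: "limsup sq = ereal s" using L0 L1 by (cases "limsup sq") auto
  have s0: "s \<ge> 0" using L0 s by simp
  define \<beta> where "\<beta> = lm / lb"
  have \<beta>0: "\<beta> \<ge> 0" unfolding \<beta>_def using lm_nonneg lb_pos by simp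
  have rhs: "limsup (\<lambda>n. ereal (real (card {i \<in> {1..n}. Ds i = D}) / real n))
       * ereal (ln (real (card D)) / ln (real_of_int b)) = ereal (s * \<beta>)"
    unfolding sqeq s by (simp add: \<beta>_def lm_def lb_def m_def BB_def)
  define A where "A = {ereal r | r. r > 0 \<and> upper_beurling_density r (Lambda_set b Ds) = 0}"
  have ge: "ereal (s * \<beta>) \<le> Inf A"
  proof (rule Inf_greatest)
    fix a assume "a \<in> A"
    then obtain r where a: "a = ereal r" and r: "r > 0" and dz: "upper_beurling_density r (Lambda_set b Ds) = 0"
      unfolding A_def by blast
    show "ereal (s * \<beta>) \<le> a"
    proof (rule ccontr)
      assume "\<not> ereal (s * \<beta>) \<le> a"
      then have rs: "r < s * \<beta>" using a by simp
      have \<beta>pos: "\<beta> > 0" using rs r s0 \<beta>0 by (metis less_eq_real_def mult_zero_right not_less)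
      then have lmpos: "lm > 0" unfolding \<beta>_def using lb_pos by (simp add: zero_less_divide_iff)
      have rb: "r / \<beta> < s" using rs \<beta>pos by (simp add: pos_divide_less_eq)
      have fr: "\<exists>\<^sub>F n in sequentially. ereal (r / \<beta>) < sq n"
      proof (rule ccontr)
        assume "\<not> (\<exists>\<^sub>F n in sequentially. ereal (r / \<beta>) < sq n)"
        then have "\<forall>\<^sub>F n in sequentially. sq n \<le> ereal (r / \<beta>)"
          by (simp add: not_frequently not_less)
        then have "limsup sq \<le> ereal (r / \<beta>)" by (rule Limsup_bounded)
        then show False using s rb by simp
      qed
      have imp: "\<forall>n. ereal (r / \<beta>) < sq n \<longrightarrow> r * real n * lb < real (N n) * lm"
      proof (intro allI impI)
        fix n assume "ereal (r / \<beta>) < sq n"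
        then have q: "r / \<beta> < real (N n) / real n" by (simp add: sq_def)
        have "n \<noteq> 0"
        proof
          assume n0: "n = 0"
          have "r / \<beta> > 0" by (rule divide_pos_pos[OF r \<beta>pos])
          moreover have "real (N n) / real n = 0" using n0 by simp
          ultimately show False using q by linarith
        qed
        then have np: "real n > 0" by simp
        have "r * lb / lm < real (N n) / real n" using q by (simp add: \<beta>_def)
        then have "r * lb < real (N n) / real n * lm" using lmpos by (simp add: pos_divide_less_eq)
        then have "r * lb * real n < real (N n) * lm" using np by (simp add: field_simps)
        then show "r * real n * lb < real (N n) * lm" by (simp add: algebra_simps)
      qed
      have "\<exists>\<^sub>F n in sequentially. r * real n * lb < real (N n) * lm"
        by (rule frequently_mono[OF imp fr])
      then have "upper_beurling_density r (Lambda_set b Ds) \<noteq> 0" using r by (intro dens_pos)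
      then show False using dz by simp
    qed
  qed
  have le: "Inf A \<le> ereal (s * \<beta>)"
  proof (rule ereal_le_epsilon2)
    fix e :: real assume e: "e > 0"
    define r where "r = s * \<beta> + e"
    define c where "c = s * \<beta> + e / 2"
    have sb: "s * \<beta> \<ge> 0" using s0 \<beta>0 by simp
    have r0: "r > 0" using e sb by (simp add: r_def)
    have cr: "c < r" using e by (simp add: r_def c_def)
    have c0: "c > 0" using e sb by (simp add: c_def)
    have ev: "\<forall>\<^sub>F n in sequentially. real (N n) * lm \<le> c * real n * lb"
    proof (cases "lm = 0")
      case True
      then show ?thesis using c0 lb_pos by (intro always_eventually allI) simp
    next
      case False
      then have lmpos: "lm > 0" using lm_nonneg by simp
      then have \<beta>pos: "\<beta> > 0" unfolding \<beta>_def using lb_pos by simp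
      have "s < c / \<beta>" using \<beta>pos e by (simp add: c_def field_simps)
      then have "limsup sq < ereal (c / \<beta>)" using s by simp
      then have "\<forall>\<^sub>F n in sequentially. sq n < ereal (c / \<beta>)" by (rule Limsup_lessD)
      then show ?thesis
      proof (rule eventually_mono)
        fix n assume "sq n < ereal (c / \<beta>)"
        then have q: "real (N n) / real n < c / \<beta>" by (simp add: sq_def)
        show "real (N n) * lm \<le> c * real n * lb"
        proof (cases "n = 0")
          case True then show ?thesis by (simp add: N_def)
        next
          case False
          then have np: "real n > 0" by simp
          have "real (N n) / real n < c * lb / lm" using q by (simp add: \<beta>_def)
          then have "real (N n) < c * lb / lm * real n" using np by (simp add: divide_less_eq)
          then have "real (N n) * lm < c * lb * real n" using lmpos by (simp add: field_simps)
          then show ?thesis by (simp add: algebra_simps)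
        qed
      qed
    qed
    have "upper_beurling_density r (Lambda_set b Ds) = 0" by (rule dens_zero[OF r0 cr ev])
    then have "ereal r \<in> A" using r0 unfolding A_def by blast
    then have "Inf A \<le> ereal r" by (rule Inf_lower)
    then show "Inf A \<le> ereal (s * \<beta>) + ereal e" by (simp add: r_def)
  qed
  have "beurling_dim (Lambda_set b Ds) = Inf A" unfolding beurling_dim_def A_def by simp
  with ge le rhs show ?thesis by simp
qed

end
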